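(* Let $k\ge3$, let $m_1,\dots,m_{k-1}\ge0$ be integers, and fix $w\in\mathcal P(\mathcal M_{k-2})$ (letters $e_1,\dots,e_{k-2}$ with counts $m_1,\dots,m_{k-2}$) and $\Pi\in\mathcal P([m_{k-2}\times m_{k-1}])$. Consider the words $W\in\mathcal P(\mathcal M_{k-1})$ such that: (i) deleting all letters $e_{k-1}$ from $W$ gives $w$, and (ii) deleting all letters $e_1,\dots,e_{k-3}$ from $W$ and renaming $e_{k-2}\mapsto a$, $e_{k-1}\mapsto b$ gives $\Pi$. The number of such $W$ is $$\prod_{r=0}^{m_{k-2}}\binom{\pi^\star(\Pi)(r)+\sum_{l=1}^{k-3}\pi^\star_{k-2,l}(w)(r)}{\pi^\star(\Pi)(r)}.$$ All such $W$ yield the same value $S(w)\cdot\pi^\star(\Pi)=\sum_{r=0}^{m_{k-2}}S_r(w)\pi^\star(\Pi)(r)$ of the count of position tuples $p_1<\dots<p_{k-1}$ with letter $e_j$ at $p_j$. Summing these counts over all $(w,\Pi)$ gives $\binom{m_1+\cdots+m_{k-1}}{m_1,\ldots,m_{k-1}}$.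
   Context: $\mathcal P(\mathcal M_d)$ is the set of words of length $m_1+\dots+m_d$ in letters $e_1,\dots,e_d$ containing exactly $m_i$ copies of $e_i$. For a word $w$ and $i\ne j$, $\pi_{i,j}(w)(s)$ ($s=1,\dots,m_j$) is the number of occurrences of $e_i$ preceding the $s$-th occurrence of $e_j$, and $\pi^\star_{i,j}(w)(r)=\#\{s:\pi_{i,j}(w)(s)=r\}$. $S_t(w)$, for $w\in\mathcal P(\mathcal M_d)$ and $0\le t\le m_d$, is the number of position tuples $p_1<\dots<p_d$ in $w$ with letter $e_i$ at $p_i$ for each $i$, and $p_d$ at or before the $t$-th occurrence of $e_d$. $\mathcal P([m_{k-2}\times m_{k-1}])$ is the set of words with $m_{k-2}$ letters $a$ and $m_{k-1}$ letters $b$. For such $\Pi$, $\pi(\Pi)(s)$ is the number of $a$'s before the $s$-th $b$, and $\pi^\star(\Pi)(r)=\#\{s:\pi(\Pi)(s)=r\}$ for $r=0,\dots,m_{k-2}$. An empty sum over $l$ is $0$. *)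

theory Defs
  imports Main
begin

text \<open>Letters e_1,...,e_d are encoded as the natural numbers 1,...,d.\<close>

definition words :: "(nat \<Rightarrow> nat) \<Rightarrow> nat \<Rightarrow> nat list set" where
  "words m d = {w. set w \<subseteq> {1..d} \<and> (\<forall>i\<in>{1..d}. count_list w i = m i)}"

datatype ab = A | B

definition abwords :: "nat \<Rightarrow> nat \<Rightarrow> ab list set" where
  "abwords p q = {P. count_list P A = p \<and> count_list P B = q}"

text \<open>Position (0-based) of the s-th occurrence (s >= 1) of letter j in w.\<close>
definition occ_pos :: "'a \<Rightarrow> 'a list \<Rightarrow> nat \<Rightarrow> nat" where
  "occ_pos j w s = (THE p. p < length w \<and> w ! p = j \<and> count_list (take p w) j = s - 1)"

definition prec :: "'a \<Rightarrow> 'a \<Rightarrow> 'a list \<Rightarrow> nat \<Rightarrow> nat" where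
  "prec i j w s = count_list (take (occ_pos j w s) w) i"

definition pistar :: "'a \<Rightarrow> 'a \<Rightarrow> 'a list \<Rightarrow> nat \<Rightarrow> nat" where
  "pistar i j w r = card {s \<in> {1..count_list w j}. prec i j w s = r}"

definition tuples :: "nat \<Rightarrow> nat list \<Rightarrow> nat" where
  "tuples d w = card {p. length p = d \<and> sorted_wrt (<) p \<and>
      (\<forall>q<d. p ! q < length w \<and> w ! (p ! q) = Suc q)}"

text \<open>S_t(w): as above, with p_d at or before the t-th occurrence of e_d.\<close>
definition Scount :: "nat \<Rightarrow> nat list \<Rightarrow> nat \<Rightarrow> nat" where
  "Scount d w t = card {p. length p = d \<and> sorted_wrt (<) p \<and>
      (\<forall>q<d. p ! q < length w \<and> w ! (p ! q) = Suc q) \<and>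
      count_list (take (Suc (p ! (d - 1))) w) d \<le> t}"

definition multinomial :: "(nat \<Rightarrow> nat) \<Rightarrow> nat \<Rightarrow> nat" where
  "multinomial m d = fact (\<Sum>i=1..d. m i) div (\<Prod>i=1..d. fact (m i))"

end

theory Submission
  imports Defs
begin


fun gapcnt :: "'a \<Rightarrow> ('a \<Rightarrow> bool) \<Rightarrow> 'a list \<Rightarrow> nat \<Rightarrow> nat" where
  "gapcnt c Q [] r = 0"
| "gapcnt c Q (x#xs) r = (if Q x \<and> r = 0 then 1 else 0) +
     (if x = c then (case r of 0 \<Rightarrow> 0 | Suc r' \<Rightarrow> gapcnt c Q xs r') else gapcnt c Q xs r)"

lemma gapcnt_snoc:
  "gapcnt c Q (xs @ [x]) r = gapcnt c Q xs r + (if Q x \<and> r = count_list xs c then 1 else 0)"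
  by (induction xs arbitrary: r) (auto split: nat.split)

lemma gapcnt_zero: "count_list xs c < r \<Longrightarrow> gapcnt c Q xs r = 0"
  by (induction xs arbitrary: r) (auto split: nat.split)

lemma gapcnt_cong: "\<forall>x\<in>set xs. Q x = Q' x \<Longrightarrow> gapcnt c Q xs r = gapcnt c Q' xs r"
  by (induction xs arbitrary: r) (auto split: nat.split)

lemma gapcnt_sum: "finite L \<Longrightarrow> (\<Sum>l\<in>L. gapcnt c (\<lambda>x. x = l) xs r) = gapcnt c (\<lambda>x. x \<in> L) xs r"
  by (induction xs arbitrary: r) (auto split: nat.split simp: sum.distrib)

lemma gapcnt_noc: "c \<notin> set xs \<Longrightarrow> gapcnt c Q xs 0 = length (filter Q xs)"
  by (induction xs) auto

definition Fib :: "'a \<Rightarrow> 'a \<Rightarrow> 'a list \<Rightarrow> ab list \<Rightarrow> 'a list set" where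
  "Fib b c w P = {W. filter (\<lambda>x. x \<noteq> b) W = w \<and>
     map (\<lambda>x. if x = c then A else B) (filter (\<lambda>x. x = c \<or> x = b) W) = P}"

lemma Fib_Nil: "[] \<in> Fib b c w P \<longleftrightarrow> w = [] \<and> P = []"
  by (auto simp: Fib_def)

lemma Fib_Cons_b: "b \<noteq> c \<Longrightarrow> b#W \<in> Fib b c w P \<longleftrightarrow> (\<exists>P'. P = B#P' \<and> W \<in> Fib b c w P')"
  by (auto simp: Fib_def)

lemma Fib_Cons_c: "b \<noteq> c \<Longrightarrow> c#W \<in> Fib b c w P \<longleftrightarrow> (\<exists>w' P'. w = c#w' \<and> P = A#P' \<and> W \<in> Fib b c w' P')"
  by (auto simp: Fib_def)

lemma Fib_Cons_x: "x \<noteq> b \<Longrightarrow> x \<noteq> c \<Longrightarrow> x#W \<in> Fib b c w P \<longleftrightarrow> (\<exists>w'. w = x#w' \<and> W \<in> Fib b c w' P)"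
  by (auto simp: Fib_def)

lemma Fib_Cons: "b \<noteq> c \<Longrightarrow> y#W \<in> Fib b c w P \<longleftrightarrow>
   (y = b \<and> (\<exists>P'. P = B#P' \<and> W \<in> Fib b c w P')) \<or>
   (y = c \<and> (\<exists>w' P'. w = c#w' \<and> P = A#P' \<and> W \<in> Fib b c w' P')) \<or>
   (y \<noteq> b \<and> y \<noteq> c \<and> (\<exists>w'. w = y#w' \<and> W \<in> Fib b c w' P))"
  using Fib_Cons_b[of b c W w P] Fib_Cons_c[of b c W w P] Fib_Cons_x[of y b c W w P] by auto

lemma Fib_mem: "b \<noteq> c \<Longrightarrow> W \<in> Fib b c w P \<longleftrightarrow> (case W of [] \<Rightarrow> w = [] \<and> P = [] | y#W' \<Rightarrow>
   (y = b \<and> (\<exists>P'. P = B#P' \<and> W' \<in> Fib b c w P')) \<or>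
   (y = c \<and> (\<exists>w' P'. w = c#w' \<and> P = A#P' \<and> W' \<in> Fib b c w' P')) \<or>
   (y \<noteq> b \<and> y \<noteq> c \<and> (\<exists>w'. w = y#w' \<and> W' \<in> Fib b c w' P)))"
  by (cases W) (simp_all add: Fib_Nil Fib_Cons)

lemma F1: "b \<noteq> c \<Longrightarrow> Fib b c [] [] = {[]}"
  by (auto simp: Fib_mem split: list.splits)
lemma F2: "b \<noteq> c \<Longrightarrow> x \<noteq> c \<Longrightarrow> x \<noteq> b \<Longrightarrow>
   Fib b c (x#w') (B#P') = Cons b ` Fib b c (x#w') P' \<union> Cons x ` Fib b c w' (B#P')"
  apply (rule set_eqI) subgoal for W by (cases W) (auto simp: Fib_Cons Fib_Nil) done
lemma F3: "b \<noteq> c \<Longrightarrow> w = [] \<or> hd w = c \<Longrightarrow>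
   Fib b c w (B#P') = Cons b ` Fib b c w P'"
  apply (rule set_eqI) subgoal for W by (cases W) (auto simp: Fib_Cons Fib_Nil) done
lemma F4: "b \<noteq> c \<Longrightarrow> Fib b c (c#w') (A#P') = Cons c ` Fib b c w' P'"
  apply (rule set_eqI) subgoal for W by (cases W) (auto simp: Fib_Cons Fib_Nil) done
lemma F5: "b \<noteq> c \<Longrightarrow> x \<noteq> c \<Longrightarrow> x \<noteq> b \<Longrightarrow> P = [] \<or> hd P = A \<Longrightarrow>
   Fib b c (x#w') P = Cons x ` Fib b c w' P"
  apply (rule set_eqI) subgoal for W by (cases W) (auto simp: Fib_Cons Fib_Nil) done


abbreviation bet :: "ab list \<Rightarrow> nat \<Rightarrow> nat" where "bet P r \<equiv> gapcnt A (\<lambda>x. x = B) P r"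
abbreviation gam :: "'a \<Rightarrow> 'a list \<Rightarrow> nat \<Rightarrow> nat" where "gam c w r \<equiv> gapcnt c (\<lambda>x. x \<noteq> c) w r"

definition Prd :: "'a \<Rightarrow> 'a list \<Rightarrow> ab list \<Rightarrow> nat" where
  "Prd c w P = (\<Prod>r\<le>count_list P A. (bet P r + gam c w r) choose bet P r)"

lemma Prd_split: "Prd c w P = ((bet P 0 + gam c w 0) choose bet P 0) *
   (\<Prod>i<count_list P A. (bet P (Suc i) + gam c w (Suc i)) choose bet P (Suc i))"
  unfolding Prd_def by (rule prod.atMost_shift)

lemma card_Fib:
  assumes "b \<noteq> c"
  shows "b \<notin> set w \<Longrightarrow> count_list w c = count_list P A \<Longrightarrow>
    finite (Fib b c w P) \<and> card (Fib b c w P) = Prd c w P"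
proof (induction "length w + length P" arbitrary: w P rule: less_induct)
  case less
  show ?case
  proof (cases w)
    case Nil
    show ?thesis
    proof (cases P)
      case Nil
      then show ?thesis using \<open>w = []\<close> assms by (simp add: F1 Prd_def)
    next
      case (Cons p P')
      show ?thesis
      proof (cases p)
        case A then show ?thesis using less.prems Cons Nil by simp
      next
        case B
        have IH: "finite (Fib b c w P') \<and> card (Fib b c w P') = Prd c w P'"
          using less Nil Cons B by auto
        have e: "Fib b c w P = Cons b ` Fib b c w P'" using F3[OF assms] Nil Cons B by simp
        have "Prd c w P = Prd c w P'" unfolding Prd_split using Nil Cons B by simp
        then show ?thesis using IH e by (simp add: card_image)
      qed
    qed
  next
    case (Cons x w')
    have xb: "x \<noteq> b" "b \<notin> set w'" using less.prems Cons by auto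
    show ?thesis
    proof (cases "x = c")
      case True
      show ?thesis
      proof (cases P)
        case Nil then show ?thesis using less.prems Cons True by simp
      next
        case (Cons p P')
        show ?thesis
        proof (cases p)
          case A
          have IH: "finite (Fib b c w' P') \<and> card (Fib b c w' P') = Prd c w' P'"
            using less \<open>w = x#w'\<close> Cons A True xb by auto
          have e: "Fib b c w P = Cons c ` Fib b c w' P'" using F4[OF assms] \<open>w = x#w'\<close> Cons A True by simp
          have "Prd c w P = Prd c w' P'"
            unfolding Prd_def using \<open>w = x#w'\<close> Cons A True by (simp add: prod.atMost_Suc_shift del: prod.atMost_Suc)
          then show ?thesis using IH e by (simp add: card_image)
        next
          case B
          have IH: "finite (Fib b c w P') \<and> card (Fib b c w P') = Prd c w P'"
            using less \<open>w = x#w'\<close> Cons B True by auto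
          have e: "Fib b c w P = Cons b ` Fib b c w P'" using F3[OF assms] \<open>w = x#w'\<close> Cons B True by simp
          have "Prd c w P = Prd c w P'" unfolding Prd_split using \<open>w = x#w'\<close> Cons B True by simp
          then show ?thesis using IH e by (simp add: card_image)
        qed
      qed
    next
      case False
      show ?thesis
      proof (cases "P \<noteq> [] \<and> hd P = B")
        case True
        then obtain P' where P: "P = B # P'" by (cases P) auto
        have IH1: "finite (Fib b c w P') \<and> card (Fib b c w P') = Prd c w P'"
          using less P by auto
        have IH2: "finite (Fib b c w' P) \<and> card (Fib b c w' P) = Prd c w' P"
          using less \<open>w = x#w'\<close> False xb by auto
        have e: "Fib b c w P = Cons b ` Fib b c w P' \<union> Cons x ` Fib b c w' P"
          using F2[OF assms False xb(1)] \<open>w = x#w'\<close> P by simp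
        have d: "Cons b ` Fib b c w P' \<inter> Cons x ` Fib b c w' P = {}" using xb by auto
        have "card (Fib b c w P) = Prd c w P' + Prd c w' P"
          using IH1 IH2 e d by (simp add: card_Un_disjoint card_image)
        also have "\<dots> = Prd c w P"
        proof -
          define R where "R = (\<Prod>i<count_list P A. (bet P (Suc i) + gam c w (Suc i)) choose bet P (Suc i))"
          define u where "u = bet P' 0" define g where "g = gam c w' 0"
          have R1: "(\<Prod>i<count_list P' A. (bet P' (Suc i) + gam c w (Suc i)) choose bet P' (Suc i)) = R"
            unfolding R_def using P by simp
          have R2: "(\<Prod>i<count_list P A. (bet P (Suc i) + gam c w' (Suc i)) choose bet P (Suc i)) = R"
            unfolding R_def using \<open>w = x#w'\<close> False by simp
          have a: "Prd c w P' = ((u + Suc g) choose u) * R" unfolding Prd_split R1[symmetric]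
            using \<open>w = x#w'\<close> False by (simp add: u_def g_def)
          have b2: "Prd c w' P = ((Suc u + g) choose Suc u) * R" unfolding Prd_split R2[symmetric]
            using P by (simp add: u_def g_def)
          have c2: "Prd c w P = ((Suc u + Suc g) choose Suc u) * R" unfolding Prd_split R_def
            using P \<open>w = x#w'\<close> False by (simp add: u_def g_def)
          show ?thesis unfolding a b2 c2 by (simp add: algebra_simps)
        qed
        finally show ?thesis using e IH1 IH2 by simp
      next
        case nB: False
        have hP: "P = [] \<or> hd P = A" using nB ab.exhaust by auto
        have IH: "finite (Fib b c w' P) \<and> card (Fib b c w' P) = Prd c w' P"
          using less \<open>w = x#w'\<close> False xb by auto
        have e: "Fib b c w P = Cons x ` Fib b c w' P" using F5[OF assms False xb(1) hP] \<open>w = x#w'\<close> by simp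
        have b0: "bet P 0 = 0" using hP by (cases P) auto
        have "Prd c w P = Prd c w' P" unfolding Prd_split using \<open>w = x#w'\<close> False b0 by simp
        then show ?thesis using IH e by (simp add: card_image)
      qed
    qed
  qed
qed



definition TS :: "nat \<Rightarrow> nat list \<Rightarrow> nat list set" where
  "TS d w = {p. length p = d \<and> sorted_wrt (<) p \<and> (\<forall>q<d. p ! q < length w \<and> w ! (p ! q) = Suc q)}"

lemma tuples_TS: "tuples d w = card (TS d w)" unfolding tuples_def TS_def ..

lemma TS_finite: "finite (TS d w)"
proof -
  have "TS d w \<subseteq> {p. set p \<subseteq> {..<length w} \<and> length p = d}"
    unfolding TS_def by (auto simp: in_set_conv_nth)
  then show ?thesis using finite_lists_length_eq[of "{..<length w}" d] finite_subset by blast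
qed

lemma TS_0: "TS 0 w = {[]}" unfolding TS_def by auto

lemma tuples_0: "tuples 0 w = 1" by (simp add: tuples_TS TS_0)

lemma TS_snoc: "TS (Suc j) (W @ [y]) = TS (Suc j) W \<union>
   (if y = Suc j then (\<lambda>p. p @ [length W]) ` TS j W else {})" (is "?L = ?rhs")
proof (intro set_eqI iffI)
  fix p assume p: "p \<in> TS (Suc j) (W @ [y])"
  then have len: "length p = Suc j" and s: "sorted_wrt (<) p"
    and h: "\<And>q. q < Suc j \<Longrightarrow> p ! q < Suc (length W) \<and> (W @ [y]) ! (p ! q) = Suc q"
    unfolding TS_def by auto
  have le: "\<And>q. q < Suc j \<Longrightarrow> p ! q \<le> p ! j"
    using s len by (metis less_Suc_eq nat_less_le order_refl sorted_wrt_nth_less)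
  show "p \<in> ?rhs"
  proof (cases "p ! j < length W")
    case True
    have "\<forall>q<Suc j. p ! q < length W \<and> W ! (p ! q) = Suc q"
      using h le True by (metis le_less_trans nth_append)
    then show ?thesis using len s unfolding TS_def by auto
  next
    case False
    then have pj: "p ! j = length W" using h[of j] by auto
    then have y: "y = Suc j" using h[of j] by simp
    have pe: "p = butlast p @ [length W]"
      using len pj by (metis append_butlast_last_id diff_Suc_1 last_conv_nth length_0_conv nat.distinct(1))
    have "butlast p \<in> TS j W"
    proof -
      have "sorted_wrt (<) (butlast p)" using s pe by (metis sorted_wrt_append)
      moreover have "\<forall>q<j. butlast p ! q < length W \<and> W ! (butlast p ! q) = Suc q"
      proof (intro allI impI)
        fix q assume q: "q < j"
        have "p ! q < p ! j" using s len q sorted_wrt_nth_less by fastforce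
        then show "butlast p ! q < length W \<and> W ! (butlast p ! q) = Suc q"
          using h[of q] q pj len by (simp add: nth_butlast nth_append)
      qed
      ultimately show ?thesis using len unfolding TS_def by simp
    qed
    then show ?thesis using y pe by auto
  qed
next
  fix p assume "p \<in> ?rhs"
  then consider "p \<in> TS (Suc j) W" | p' where "y = Suc j" "p' \<in> TS j W" "p = p' @ [length W]"
    by (auto split: if_splits)
  then show "p \<in> TS (Suc j) (W @ [y])"
  proof cases
    case 1 then show ?thesis unfolding TS_def by (auto simp: nth_append)
  next
    case 2
    have "\<forall>x\<in>set p'. x < length W" using 2(2) unfolding TS_def by (auto simp: in_set_conv_nth)
    then show ?thesis using 2 unfolding TS_def
      by (auto simp: nth_append sorted_wrt_append less_Suc_eq)
  qed
qed

lemma tuples_snoc: "tuples (Suc j) (W @ [y]) = tuples (Suc j) W + (if y = Suc j then tuples j W else 0)"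
proof -
  have d: "TS (Suc j) W \<inter> (\<lambda>p. p @ [length W]) ` TS j W = {}"
    unfolding TS_def by auto
  have i: "inj_on (\<lambda>p. p @ [length W]) (TS j W)" by (auto simp: inj_on_def)
  show ?thesis unfolding tuples_TS TS_snoc
    using d i TS_finite by (simp add: card_Un_disjoint card_image)
qed

lemma tuples_filter: "j < b \<Longrightarrow> tuples j (filter (\<lambda>x. x \<noteq> b) W) = tuples j W"
proof (induction W arbitrary: j rule: rev_induct)
  case Nil then show ?case by simp
next
  case (snoc y W)
  show ?case
  proof (cases j)
    case 0 then show ?thesis by (simp add: tuples_0)
  next
    case (Suc j')
    then show ?thesis using snoc by (auto simp: tuples_snoc)
  qed
qed


lemma count_take_le: "count_list (take n w) x \<le> count_list w x"
  by (metis append_take_drop_id count_list_append le_add1)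

lemma Scount_full: "Scount d w (count_list w d) = tuples d w"
  unfolding Scount_def tuples_def using count_take_le by metis

lemma Scount_snoc:
  assumes d: "1 \<le> d" and t: "t \<le> count_list w d"
  shows "Scount d (w @ [y]) t = Scount d w t"
proof -
  have "{p. length p = d \<and> sorted_wrt (<) p \<and>
      (\<forall>q<d. p ! q < length (w@[y]) \<and> (w@[y]) ! (p ! q) = Suc q) \<and>
      count_list (take (Suc (p ! (d - 1))) (w@[y])) d \<le> t} =
    {p. length p = d \<and> sorted_wrt (<) p \<and>
      (\<forall>q<d. p ! q < length w \<and> w ! (p ! q) = Suc q) \<and>
      count_list (take (Suc (p ! (d - 1))) w) d \<le> t}" (is "?X = ?Y")
  proof (intro set_eqI iffI)
    fix p assume "p \<in> ?X"
    then have len: "length p = d" and s: "sorted_wrt (<) p"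
      and h: "\<And>q. q < d \<Longrightarrow> p ! q < Suc (length w) \<and> (w @ [y]) ! (p ! q) = Suc q"
      and c: "count_list (take (Suc (p ! (d - 1))) (w@[y])) d \<le> t" by auto
    have le: "\<And>q. q < d \<Longrightarrow> p ! q \<le> p ! (d-1)"
      using s len d by (metis Suc_pred' diff_less less_Suc_eq_le less_one linorder_not_less nat_less_le sorted_wrt_nth_less zero_less_one le_less_trans)
    have lt: "p ! (d-1) < length w"
    proof (rule ccontr)
      assume "\<not> ?thesis"
      then have e: "p ! (d-1) = length w" using h[of "d-1"] d by auto
      then have "y = d" using h[of "d-1"] d by simp
      then show False using c e t by simp
    qed
    have "\<forall>q<d. p ! q < length w \<and> w ! (p ! q) = Suc q"
      using h le lt by (metis le_less_trans nth_append)
    moreover have "take (Suc (p ! (d - 1))) (w@[y]) = take (Suc (p ! (d - 1))) w" using lt by simp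
    ultimately show "p \<in> ?Y" using len s c by simp
  next
    fix p assume "p \<in> ?Y"
    moreover have "p ! (d-1) < length w" if "p \<in> ?Y" using that d by auto
    ultimately show "p \<in> ?X" by (auto simp: nth_append)
  qed
  then show ?thesis unfolding Scount_def by simp
qed

lemma count_filter_ne: "x \<noteq> b \<Longrightarrow> count_list (filter (\<lambda>y. y \<noteq> b) W) x = count_list W x"
  by (induction W) auto

lemma count_map_A: "count_list (map (\<lambda>x. if x = c then A else B) (filter (\<lambda>x. x = c \<or> x = b) W)) A
   = count_list W c"
  by (induction W) auto

lemma tuples_main:
  assumes d: "1 \<le> d"
  shows "count_list W d \<le> N \<Longrightarrow> tuples (Suc d) W = (\<Sum>r\<le>N. Scount d (filter (\<lambda>x. x \<noteq> Suc d) W) r *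
     bet (map (\<lambda>x. if x = d then A else B) (filter (\<lambda>x. x = d \<or> x = Suc d) W)) r)"
proof (induction W rule: rev_induct)
  case Nil
  have "TS (Suc d) [] = {}" unfolding TS_def by (auto dest: spec[of _ 0])
  then show ?case by (simp add: tuples_TS)
next
  case (snoc y W)
  define w where "w = filter (\<lambda>x. x \<noteq> Suc d) W"
  define P where "P = map (\<lambda>x. if x = d then A else B) (filter (\<lambda>x. x = d \<or> x = Suc d) W)"
  have cP: "count_list P A = count_list W d" unfolding P_def by (rule count_map_A)
  have cw: "count_list w d = count_list W d" unfolding w_def by (simp add: count_filter_ne)
  have IH: "tuples (Suc d) W = (\<Sum>r\<le>N. Scount d w r * bet P r)"
    using snoc by (simp add: w_def P_def)
  show ?case
  proof (cases "y = Suc d")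
    case True
    have "tuples (Suc d) (W @ [y]) = tuples (Suc d) W + tuples d W"
      using True by (simp add: tuples_snoc)
    also have "tuples d W = Scount d w (count_list P A)"
      using cP cw Scount_full[of d w] tuples_filter[of d "Suc d" W] by (simp add: w_def)
    also have "\<dots> = (\<Sum>r\<le>N. Scount d w r * (if r = count_list P A then 1 else 0))"
      using snoc.prems cP True by (simp add: if_distrib cong: if_cong)
    finally show ?thesis using True IH
      by (simp add: w_def[symmetric] P_def[symmetric] gapcnt_snoc sum.distrib algebra_simps)
  next
    case False
    have t: "tuples (Suc d) (W @ [y]) = tuples (Suc d) W" using False by (simp add: tuples_snoc)
    have P': "map (\<lambda>x. if x = d then A else B) (filter (\<lambda>x. x = d \<or> x = Suc d) (W@[y]))
       = P @ (if y = d then [A] else [])" using False by (simp add: P_def)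
    have bP: "bet (P @ (if y = d then [A] else [])) r = bet P r" for r
      by (cases "y = d") (simp_all add: gapcnt_snoc)
    have w': "filter (\<lambda>x. x \<noteq> Suc d) (W@[y]) = w @ [y]" using False by (simp add: w_def)
    have "Scount d (w @ [y]) r * bet P r = Scount d w r * bet P r" for r
    proof (cases "r \<le> count_list w d")
      case True then show ?thesis using Scount_snoc[OF d True] by simp
    next
      case False then show ?thesis using gapcnt_zero[of P A r] cP cw by simp
    qed
    then have "(\<Sum>r\<le>N. Scount d (w @ [y]) r * bet P r) = (\<Sum>r\<le>N. Scount d w r * bet P r)"
      by (intro sum.cong) auto
    then show ?thesis using t IH by (simp only: P' w' bP)
  qed
qed



lemma card_less_Suc_split:
  "card {p. p < Suc n \<and> R p} = (if R 0 then 1 else 0) + card {q. q < n \<and> R (Suc q)}"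
proof -
  have e: "{p. p < Suc n \<and> R p} = (if R 0 then {0} else {}) \<union> Suc ` {q. q < n \<and> R (Suc q)}"
    by (auto simp: less_Suc_eq_0_disj)
  show ?thesis unfolding e by (simp add: card_image)
qed

lemma pc_gapcnt:
  "card {p. p < length w \<and> w ! p = j \<and> count_list (take p w) i = r} = gapcnt i (\<lambda>x. x = j) w r"
proof (induction w arbitrary: r)
  case Nil then show ?case by simp
next
  case (Cons x xs)
  have "card {p. p < length (x#xs) \<and> (x#xs) ! p = j \<and> count_list (take p (x#xs)) i = r}
     = (if x = j \<and> r = 0 then 1 else 0) +
       card {q. q < length xs \<and> xs ! q = j \<and> (if x = i then 1 else 0) + count_list (take q xs) i = r}"
    using card_less_Suc_split[of "length xs" "\<lambda>p. (x#xs) ! p = j \<and> count_list (take p (x#xs)) i = r"]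
    by simp
  also have "\<dots> = gapcnt i (\<lambda>x. x = j) (x#xs) r"
  proof (cases "x = i")
    case True
    then show ?thesis using Cons by (cases r) auto
  next
    case False
    then show ?thesis using Cons by simp
  qed
  finally show ?case .
qed

lemma occ_ex: "1 \<le> s \<Longrightarrow> s \<le> count_list w j \<Longrightarrow>
   \<exists>p<length w. w ! p = j \<and> count_list (take p w) j = s - 1"
proof (induction w arbitrary: s)
  case Nil then show ?case by simp
next
  case (Cons x xs)
  show ?case
  proof (cases "x = j")
    case True
    show ?thesis
    proof (cases "s = 1")
      case True then show ?thesis using \<open>x = j\<close> by (intro exI[of _ 0]) auto
    next
      case False
      have "\<exists>p<length xs. xs ! p = j \<and> count_list (take p xs) j = s - 1 - 1"
        using Cons.IH[of "s - 1"] Cons.prems True False by auto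
      then obtain p where "p < length xs" "xs ! p = j" "count_list (take p xs) j = s - 1 - 1"
        by auto
      then show ?thesis using True Cons.prems False by (intro exI[of _ "Suc p"]) auto
    qed
  next
    case False
    then obtain p where "p < length xs" "xs ! p = j" "count_list (take p xs) j = s - 1"
      using Cons.IH[of s] Cons.prems by auto
    then show ?thesis using False by (intro exI[of _ "Suc p"]) auto
  qed
qed

lemma count_take_Suc: "p < length w \<Longrightarrow>
  count_list (take (Suc p) w) j = count_list (take p w) j + (if w ! p = j then 1 else 0)"
  by (simp add: take_Suc_conv_app_nth)

lemma count_take_mono: "p \<le> p' \<Longrightarrow> count_list (take p w) j \<le> count_list (take p' w) j"
  by (metis count_take_le min.absorb1 take_take)

lemma occ_lt: "p < p' \<Longrightarrow> p < length w \<Longrightarrow> w ! p = j \<Longrightarrow>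
  count_list (take p w) j < count_list (take p' w) j"
  using count_take_Suc[of p w j] count_take_mono[of "Suc p" p' w j] by simp

lemma occ_uniq: "p < length w \<Longrightarrow> p' < length w \<Longrightarrow> w ! p = j \<Longrightarrow> w ! p' = j \<Longrightarrow>
  count_list (take p w) j = count_list (take p' w) j \<Longrightarrow> p = p'"
  by (metis linorder_neqE_nat occ_lt less_irrefl)

lemma pistar_gapcnt: "pistar i j w r = gapcnt i (\<lambda>x. x = j) w r"
proof -
  define Ps where "Ps = {p. p < length w \<and> w ! p = j \<and> count_list (take p w) i = r}"
  define g where "g p = Suc (count_list (take p w) j)" for p
  have occ: "occ_pos j w (g p) = p" if "p < length w" "w ! p = j" for p
    unfolding occ_pos_def g_def
    apply (rule the_equality)
    using that occ_uniq[of _ w p j] by auto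
  have "{s \<in> {1..count_list w j}. prec i j w s = r} = g ` Ps"
  proof (intro set_eqI iffI)
    fix s assume s: "s \<in> {s \<in> {1..count_list w j}. prec i j w s = r}"
    then obtain p where p: "p < length w" "w ! p = j" "count_list (take p w) j = s - 1"
      using occ_ex[of s w j] by auto
    have gp: "g p = s" using p s by (auto simp: g_def)
    then have "p \<in> Ps" using p s occ[OF p(1,2)] by (auto simp: Ps_def prec_def)
    then show "s \<in> g ` Ps" using gp by auto
  next
    fix s assume "s \<in> g ` Ps"
    then obtain p where p: "p \<in> Ps" "s = g p" by auto
    have "g p \<le> count_list w j" using p(1) count_take_Suc[of p w j] count_take_le[of "Suc p" w j]
      by (auto simp: Ps_def g_def)
    then show "s \<in> {s \<in> {1..count_list w j}. prec i j w s = r}"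
      using p occ[of p] by (auto simp: Ps_def prec_def g_def)
  qed
  moreover have "inj_on g Ps" unfolding inj_on_def Ps_def g_def using occ_uniq[of _ w _ j] by auto
  ultimately show ?thesis unfolding pistar_def
    by (simp add: card_image pc_gapcnt[symmetric] Ps_def)
qed



lemma Fib_set: "W \<in> Fib b c w P \<Longrightarrow> x \<in> set W \<Longrightarrow> x \<noteq> b \<Longrightarrow> x \<in> set w"
  unfolding Fib_def by auto

lemma count_map_B: "b \<noteq> c \<Longrightarrow> count_list (map (\<lambda>x. if x = c then A else B) (filter (\<lambda>x. x = c \<or> x = b) W)) B
   = count_list W b"
  by (induction W) auto

lemma map_rep: "(0::nat) \<notin> set W \<Longrightarrow>
  map (\<lambda>x. if x = 0 then A else B) (filter (\<lambda>x. x = 0 \<or> x = b) W) = replicate (count_list W b) B"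
  by (induction W) auto

lemma bet_rep: "bet (replicate n B) 0 = n"
  by (induction n) auto

lemma length_ab: "length (P::ab list) = count_list P A + count_list P B"
  proof (induction P) case (Cons x xs) then show ?case by (cases x) auto qed simp

lemma finite_abwords: "finite (abwords p q)"
proof -
  have "abwords p q \<subseteq> {P. set P \<subseteq> {A, B} \<and> length P = p + q}"
    unfolding abwords_def using length_ab ab.exhaust by auto
  then show ?thesis using finite_lists_length_eq[of "{A,B}" "p+q"] finite_subset by blast
qed

lemma words_length: "w \<in> words m d \<Longrightarrow> length w = (\<Sum>i=1..d. m i)"
  unfolding words_def using sum_count_set[of w "{1..d}"] by simp

lemma finite_words: "finite (words m d)"
proof -
  have "words m d \<subseteq> {w. set w \<subseteq> {1..d} \<and> length w = (\<Sum>i=1..d. m i)}"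
    using words_length unfolding words_def by auto
  then show ?thesis using finite_lists_length_eq[of "{1..d}"] finite_subset by blast
qed

lemma words_piece:
  assumes w: "w \<in> words m d"
  shows "{W \<in> words m (Suc d). filter (\<lambda>x. x \<noteq> Suc d) W = w} = Fib (Suc d) 0 w (replicate (m (Suc d)) B)"
proof (intro set_eqI iffI)
  fix W assume W: "W \<in> {W \<in> words m (Suc d). filter (\<lambda>x. x \<noteq> Suc d) W = w}"
  then have "0 \<notin> set W" unfolding words_def by auto
  then show "W \<in> Fib (Suc d) 0 w (replicate (m (Suc d)) B)"
    using W map_rep[of W "Suc d"] unfolding Fib_def words_def by auto
next
  fix W assume W: "W \<in> Fib (Suc d) 0 w (replicate (m (Suc d)) B)"
  have s: "set W \<subseteq> {1..Suc d}"
  proof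
    fix x assume x: "x \<in> set W"
    show "x \<in> {1..Suc d}"
    proof (cases "x = Suc d")
      case False
      then have "x \<in> set w" using Fib_set[OF W x] by simp
      then show ?thesis using w unfolding words_def by auto
    qed simp
  qed
  then have "0 \<notin> set W" by auto
  then have "replicate (count_list W (Suc d)) B = replicate (m (Suc d)) B"
    using W map_rep[of W "Suc d"] unfolding Fib_def by auto
  then have cb: "count_list W (Suc d) = m (Suc d)" by simp
  have fw: "filter (\<lambda>x. x \<noteq> Suc d) W = w" using W unfolding Fib_def by auto
  have "\<forall>i\<in>{1..Suc d}. count_list W i = m i"
  proof
    fix i assume i: "i \<in> {1..Suc d}"
    show "count_list W i = m i"
    proof (cases "i = Suc d")
      case True then show ?thesis using cb by simp
    next
      case False
      then have "count_list W i = count_list w i" using fw count_filter_ne[of i "Suc d" W] by simp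
      then show ?thesis using w i False unfolding words_def by auto
    qed
  qed
  then show "W \<in> {W \<in> words m (Suc d). filter (\<lambda>x. x \<noteq> Suc d) W = w}"
    using s fw unfolding words_def by auto
qed

lemma card_words: "card (words m d) * (\<Prod>i=1..d. fact (m i)) = fact (\<Sum>i=1..d. m i)"
proof (induction d)
  case 0
  have "words m 0 = {[]}" unfolding words_def by auto
  then show ?case by simp
next
  case (Suc d)
  define S where "S = (\<Sum>i=1..d. m i)"
  define m' where "m' = m (Suc d)"
  have U: "words m (Suc d) = (\<Union>w\<in>words m d. {W \<in> words m (Suc d). filter (\<lambda>x. x \<noteq> Suc d) W = w})"
  proof (intro set_eqI iffI)
    fix W assume W: "W \<in> words m (Suc d)"
    have "\<forall>i\<in>{1..d}. count_list (filter (\<lambda>x. x \<noteq> Suc d) W) i = m i"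
    proof
      fix i assume i: "i \<in> {1..d}"
      then have "i \<noteq> Suc d" by auto
      then show "count_list (filter (\<lambda>x. x \<noteq> Suc d) W) i = m i"
        using count_filter_ne[of i "Suc d" W] W i unfolding words_def by auto
    qed
    then have "filter (\<lambda>x. x \<noteq> Suc d) W \<in> words m d"
      using W unfolding words_def by (auto simp: subset_iff)
    then show "W \<in> (\<Union>w\<in>words m d. {W \<in> words m (Suc d). filter (\<lambda>x. x \<noteq> Suc d) W = w})"
      using W by auto
  qed blast
  have pc: "card {W \<in> words m (Suc d). filter (\<lambda>x. x \<noteq> Suc d) W = w} = (m' + S) choose m'"
    if w: "w \<in> words m d" for w
  proof -
    have "0 \<notin> set w" "Suc d \<notin> set w" using w unfolding words_def by auto
    then have "card (Fib (Suc d) 0 w (replicate m' B)) = Prd 0 w (replicate m' B)"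
      using card_Fib[of "Suc d" 0 w "replicate m' B"] by (simp add: count_list_0_iff)
    also have "\<dots> = (m' + length w) choose m'"
    proof -
      have "filter ((<) 0) w = w" using \<open>0 \<notin> set w\<close> by (metis filter_True gr0I)
      then show ?thesis unfolding Prd_def using \<open>0 \<notin> set w\<close> by (simp add: bet_rep gapcnt_noc)
    qed
    finally show ?thesis using words_piece[OF w] words_length[OF w] by (simp add: m'_def S_def)
  qed
  have "card (words m (Suc d)) = card (\<Union>w\<in>words m d. {W \<in> words m (Suc d). filter (\<lambda>x. x \<noteq> Suc d) W = w})"
    by (rule arg_cong[where f=card, OF U])
  also have "\<dots> = (\<Sum>w\<in>words m d. card {W \<in> words m (Suc d). filter (\<lambda>x. x \<noteq> Suc d) W = w})"
    by (rule card_UN_disjoint) (auto simp: finite_words intro: finite_subset[OF _ finite_words[of m "Suc d"]])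
  also have "\<dots> = card (words m d) * ((m' + S) choose m')" using pc by simp
  finally have cw: "card (words m (Suc d)) = card (words m d) * ((m' + S) choose m')" .
  have "card (words m (Suc d)) * (\<Prod>i=1..Suc d. fact (m i)) =
     (card (words m d) * (\<Prod>i=1..d. fact (m i))) * (fact m' * ((m' + S) choose m'))"
    unfolding cw by (simp add: m'_def prod.cl_ivl_Suc algebra_simps)
  also have "\<dots> = fact S * (fact m' * ((m' + S) choose m'))" using Suc.IH by (simp only: S_def)
  also have "\<dots> = fact m' * fact (m' + S - m') * ((m' + S) choose m')" by simp
  also have "\<dots> = fact (m' + S)" by (rule binomial_fact_lemma) simp
  also have "\<dots> = fact (\<Sum>i=1..Suc d. m i)" by (simp add: S_def m'_def add.commute)
  finally show ?case .
qed

lemma card_words_multinomial: "card (words m d) = multinomial m d"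
proof -
  have "(\<Prod>i=1..d. fact (m i)) > (0::nat)" by (simp add: prod_pos)
  then show ?thesis unfolding multinomial_def using card_words[of m d]
    by (metis nonzero_mult_div_cancel_right not_less0 gr0I)
qed



lemma filter_conv:
  assumes "1 \<le> d" "set W \<subseteq> {1..Suc d}"
  shows "filter (\<lambda>x. x \<notin> {1..d - 1}) W = filter (\<lambda>x. x = d \<or> x = Suc d) W"
  using assms by (intro filter_cong) auto

lemma fibre_Fib:
  assumes d: "1 \<le> d" and w: "w \<in> words m d" and P: "P \<in> abwords (m d) (m (Suc d))"
  shows "{W \<in> words m (Suc d). filter (\<lambda>x. x \<noteq> Suc d) W = w \<and>
      map (\<lambda>x. if x = d then A else B) (filter (\<lambda>x. x \<notin> {1..d - 1}) W) = P} = Fib (Suc d) d w P"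
proof (intro set_eqI iffI)
  fix W assume "W \<in> {W \<in> words m (Suc d). filter (\<lambda>x. x \<noteq> Suc d) W = w \<and>
      map (\<lambda>x. if x = d then A else B) (filter (\<lambda>x. x \<notin> {1..d - 1}) W) = P}"
  then show "W \<in> Fib (Suc d) d w P"
    using filter_conv[OF d, of W] unfolding Fib_def words_def by auto
next
  fix W assume W: "W \<in> Fib (Suc d) d w P"
  have s: "set W \<subseteq> {1..Suc d}"
  proof
    fix x assume x: "x \<in> set W"
    show "x \<in> {1..Suc d}"
    proof (cases "x = Suc d")
      case False
      then have "x \<in> set w" using Fib_set[OF W x] by simp
      then show ?thesis using w unfolding words_def by auto
    qed simp
  qed
  have fw: "filter (\<lambda>x. x \<noteq> Suc d) W = w" and fP: "map (\<lambda>x. if x = d then A else B) (filter (\<lambda>x. x = d \<or> x = Suc d) W) = P"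
    using W unfolding Fib_def by auto
  have "count_list W (Suc d) = m (Suc d)"
    using count_map_B[of "Suc d" d W] fP P unfolding abwords_def by simp
  moreover have "count_list W i = m i" if i: "i \<in> {1..d}" for i
  proof -
    have "i \<noteq> Suc d" using i by auto
    then have "count_list W i = count_list w i" using fw count_filter_ne[of i "Suc d" W] by simp
    then show ?thesis using w i unfolding words_def by auto
  qed
  ultimately have "\<forall>i\<in>{1..Suc d}. count_list W i = m i" by (auto simp: le_Suc_eq)
  then show "W \<in> {W \<in> words m (Suc d). filter (\<lambda>x. x \<noteq> Suc d) W = w \<and>
      map (\<lambda>x. if x = d then A else B) (filter (\<lambda>x. x \<notin> {1..d - 1}) W) = P}"
    using s fw fP filter_conv[OF d s] unfolding words_def by auto
qed

theorem mainTheorem6: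
  fixes k :: nat and m :: "nat \<Rightarrow> nat"
  assumes "k \<ge> 3"
  defines "fibre \<equiv> \<lambda>w P. {W \<in> words m (k - 1).
              filter (\<lambda>x. x \<noteq> k - 1) W = w \<and>
              map (\<lambda>x. if x = k - 2 then A else B) (filter (\<lambda>x. x \<notin> {1..k - 3}) W) = P}"
  shows "(\<forall>w \<in> words m (k - 2). \<forall>P \<in> abwords (m (k - 2)) (m (k - 1)).
            card (fibre w P) =
              (\<Prod>r = 0..m (k - 2). (pistar A B P r + (\<Sum>l = 1..k - 3. pistar (k - 2) l w r))
                                       choose (pistar A B P r))
          \<and> (\<forall>W \<in> fibre w P.
               tuples (k - 1) W = (\<Sum>r = 0..m (k - 2). Scount (k - 2) w r * pistar A B P r)))
       \<and> (\<Sum>w \<in> words m (k - 2). \<Sum>P \<in> abwords (m (k - 2)) (m (k - 1)). card (fibre w P))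
           = multinomial m (k - 1)"
proof -
  define d where "d = k - 2"
  have d1: "1 \<le> d" using assms(1) by (simp add: d_def)
  have k1: "k - 1 = Suc d" and k3: "k - 3 = d - 1" using assms(1) by (auto simp: d_def)
  have fib: "fibre w P = Fib (Suc d) d w P" if "w \<in> words m d" "P \<in> abwords (m d) (m (Suc d))" for w P
    unfolding fibre_def k1 k3 d_def[symmetric] using fibre_Fib[OF d1 that] .
  have part1: "card (fibre w P) =
      (\<Prod>r = 0..m d. (pistar A B P r + (\<Sum>l = 1..d - 1. pistar d l w r)) choose (pistar A B P r))
     \<and> (\<forall>W \<in> fibre w P. tuples (Suc d) W = (\<Sum>r = 0..m d. Scount d w r * pistar A B P r))"
    if w: "w \<in> words m d" and P: "P \<in> abwords (m d) (m (Suc d))" for w P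
  proof
    have cP: "count_list P A = m d" using P unfolding abwords_def by simp
    have cw: "count_list w d = m d" using w d1 unfolding words_def by simp
    have bw: "Suc d \<notin> set w" using w unfolding words_def by auto
    have sumeq: "(\<Sum>l = 1..d - 1. pistar d l w r) = gam d w r" for r
    proof -
      have "(\<Sum>l = 1..d - 1. pistar d l w r) = gapcnt d (\<lambda>x. x \<in> {1..d-1}) w r"
        by (simp add: pistar_gapcnt gapcnt_sum)
      also have "\<dots> = gam d w r"
      proof (intro gapcnt_cong ballI)
        fix x assume "x \<in> set w"
        then have "1 \<le> x \<and> x \<le> d" using w unfolding words_def by auto
        then show "(x \<in> {1..d-1}) = (x \<noteq> d)" by auto
      qed
      finally show ?thesis .
    qed
    have "card (fibre w P) = Prd d w P"
      using fib[OF w P] card_Fib[of "Suc d" d w P] bw cw cP by simp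
    then show "card (fibre w P) =
      (\<Prod>r = 0..m d. (pistar A B P r + (\<Sum>l = 1..d - 1. pistar d l w r)) choose (pistar A B P r))"
      unfolding Prd_def sumeq cP by (simp add: atLeast0AtMost pistar_gapcnt del: Defs.pistar_def)
    show "\<forall>W \<in> fibre w P. tuples (Suc d) W = (\<Sum>r = 0..m d. Scount d w r * pistar A B P r)"
    proof
      fix W assume "W \<in> fibre w P"
      then have W: "W \<in> Fib (Suc d) d w P" using fib[OF w P] by simp
      then have fw: "filter (\<lambda>x. x \<noteq> Suc d) W = w" and fP: "map (\<lambda>x. if x = d then A else B) (filter (\<lambda>x. x = d \<or> x = Suc d) W) = P"
        unfolding Fib_def by auto
      have "count_list W d = m d" using count_filter_ne[of d "Suc d" W] fw cw by simp
      then show "tuples (Suc d) W = (\<Sum>r = 0..m d. Scount d w r * pistar A B P r)"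
        using tuples_main[OF d1, of W "m d"] fw fP by (simp add: pistar_gapcnt atLeast0AtMost)
    qed
  qed
  have part2: "(\<Sum>w \<in> words m d. \<Sum>P \<in> abwords (m d) (m (Suc d)). card (fibre w P)) = card (words m (Suc d))"
  proof -
    have fin: "finite (fibre w P)" for w P
      unfolding fibre_def by (rule finite_subset[OF _ finite_words[of m "k-1"]]) auto
    have dj: "w = w' \<and> P = P'" if "W \<in> fibre w P" "W \<in> fibre w' P'" for W w w' P P'
      using that unfolding fibre_def by auto
    have U: "words m (Suc d) = (\<Union>w\<in>words m d. \<Union>P\<in>abwords (m d) (m (Suc d)). fibre w P)"
    proof (intro set_eqI iffI)
      fix W assume W: "W \<in> words m (Suc d)"
      define w where "w = filter (\<lambda>x. x \<noteq> Suc d) W"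
      define P where "P = map (\<lambda>x. if x = d then A else B) (filter (\<lambda>x. x \<notin> {1..d - 1}) W)"
      have s: "set W \<subseteq> {1..Suc d}" using W unfolding words_def by auto
      have P': "P = map (\<lambda>x. if x = d then A else B) (filter (\<lambda>x. x = d \<or> x = Suc d) W)"
        unfolding P_def filter_conv[OF d1 s] ..
      have "\<forall>i\<in>{1..d}. count_list w i = m i"
      proof
        fix i assume i: "i \<in> {1..d}"
        then have "i \<noteq> Suc d" by auto
        then show "count_list w i = m i"
          using count_filter_ne[of i "Suc d" W] W i unfolding words_def w_def by auto
      qed
      then have wi: "w \<in> words m d" using W unfolding words_def w_def by (auto simp: subset_iff)
      have "count_list P A = m d" "count_list P B = m (Suc d)"
        using W d1 count_map_A[of d "Suc d" W] count_map_B[of "Suc d" d W] unfolding P' words_def by auto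
      then have Pi: "P \<in> abwords (m d) (m (Suc d))" unfolding abwords_def by simp
      have "W \<in> fibre w P" unfolding fibre_def k1 k3 d_def[symmetric] using W w_def P_def by simp
      then show "W \<in> (\<Union>w\<in>words m d. \<Union>P\<in>abwords (m d) (m (Suc d)). fibre w P)" using wi Pi by blast
    qed (use k1 in \<open>auto simp: fibre_def\<close>)
    have "card (words m (Suc d)) = card (\<Union>w\<in>words m d. \<Union>P\<in>abwords (m d) (m (Suc d)). fibre w P)"
      by (rule arg_cong[where f=card, OF U])
    also have "\<dots> = (\<Sum>w \<in> words m d. card (\<Union>P\<in>abwords (m d) (m (Suc d)). fibre w P))"
      by (rule card_UN_disjoint) (auto simp: finite_words finite_abwords fin dest: dj)
    also have "\<dots> = (\<Sum>w \<in> words m d. \<Sum>P \<in> abwords (m d) (m (Suc d)). card (fibre w P))"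
      by (intro sum.cong refl card_UN_disjoint) (auto simp: finite_abwords fin dest: dj)
    finally show ?thesis by simp
  qed
  show ?thesis
    unfolding k1 k3 d_def[symmetric]
    apply (rule conjI)
     apply (intro ballI part1; assumption)
    using part2 card_words_multinomial[of m "Suc d"] by (simp only:)
qed


end
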